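(* Let $B$ be a Boolean algebra that is not complete. Then there exist a CFG-space $X$ over $B$ (one may take $X=\{(x,y)\in B^2: x\wedge y=0\}$ with $d((x,y),(x',y'))=(x\triangle x')\vee(y\triangle y')$), subsets $U,V\subset X$, and an isometry $f:U\to V$ such that there is no contractive map $F:X\to X$ whose restriction to $U$ is $f$.
   Context: A Boolean metric space over $B$ is a set with symmetric $d$ into $B$, $d(x,y)=0$ iff $x=y$, $d(x,z)\le d(x,y)\vee d(y,z)$. Contractive: $d(f(x),f(y))\le d(x,y)$; isometry: bijection preserving $d$. A partition of $B$ is a finite family of pairwise disjoint elements with supremum $1$; $x$ is a convex combination of $x_0,\dots,x_n$ with coefficients a partition $a_0,\dots,a_n$ if $a_i\wedge d(x,x_i)=0$ for all $i$. A CFG-space is a Boolean metric space that is convex (every such convex combination of its points exists in it) and finitely generated (some finite subset $S$ has every point as a convex combination of points of $S$). $B$ is complete if every subset has a supremum; $\triangle$ is symmetric difference. *)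

theory Defs
  imports Main
begin

definition bool_metric_space :: "'x set \<Rightarrow> ('x \<Rightarrow> 'x \<Rightarrow> 'b::boolean_algebra) \<Rightarrow> bool" where
  "bool_metric_space X d \<longleftrightarrow>
     (\<forall>x\<in>X. \<forall>y\<in>X. d x y = d y x) \<and>
     (\<forall>x\<in>X. \<forall>y\<in>X. d x y = bot \<longleftrightarrow> x = y) \<and>
     (\<forall>x\<in>X. \<forall>y\<in>X. \<forall>z\<in>X. d x z \<le> sup (d x y) (d y z))"

definition is_partition :: "nat \<Rightarrow> (nat \<Rightarrow> 'b::boolean_algebra) \<Rightarrow> bool" where
  "is_partition n a \<longleftrightarrow>
     (\<forall>i\<le>n. \<forall>j\<le>n. i \<noteq> j \<longrightarrow> inf (a i) (a j) = bot) \<and>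
     Sup_fin (a ` {..n}) = top"

definition convex_comb :: "('x \<Rightarrow> 'x \<Rightarrow> 'b::boolean_algebra) \<Rightarrow> 'x \<Rightarrow> nat \<Rightarrow> (nat \<Rightarrow> 'x) \<Rightarrow> (nat \<Rightarrow> 'b) \<Rightarrow> bool" where
  "convex_comb d x n xs a \<longleftrightarrow> is_partition n a \<and> (\<forall>i\<le>n. inf (a i) (d x (xs i)) = bot)"

definition bms_convex :: "'x set \<Rightarrow> ('x \<Rightarrow> 'x \<Rightarrow> 'b::boolean_algebra) \<Rightarrow> bool" where
  "bms_convex X d \<longleftrightarrow>
     (\<forall>n xs a. (\<forall>i\<le>n. xs i \<in> X) \<and> is_partition n a \<longrightarrow> (\<exists>x\<in>X. convex_comb d x n xs a))"

definition bms_fin_gen :: "'x set \<Rightarrow> ('x \<Rightarrow> 'x \<Rightarrow> 'b::boolean_algebra) \<Rightarrow> bool" where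
  "bms_fin_gen X d \<longleftrightarrow>
     (\<exists>S. finite S \<and> S \<subseteq> X \<and>
        (\<forall>x\<in>X. \<exists>n xs a. (\<forall>i\<le>n. xs i \<in> S) \<and> convex_comb d x n xs a))"

definition CFG_space :: "'x set \<Rightarrow> ('x \<Rightarrow> 'x \<Rightarrow> 'b::boolean_algebra) \<Rightarrow> bool" where
  "CFG_space X d \<longleftrightarrow> bool_metric_space X d \<and> bms_convex X d \<and> bms_fin_gen X d"

definition contractive_on :: "'x set \<Rightarrow> ('x \<Rightarrow> 'x \<Rightarrow> 'b::boolean_algebra) \<Rightarrow> ('x \<Rightarrow> 'x) \<Rightarrow> bool" where
  "contractive_on X d F \<longleftrightarrow> F ` X \<subseteq> X \<and> (\<forall>x\<in>X. \<forall>y\<in>X. d (F x) (F y) \<le> d x y)"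

definition isometry_betw :: "('x \<Rightarrow> 'x \<Rightarrow> 'b::boolean_algebra) \<Rightarrow> ('x \<Rightarrow> 'x) \<Rightarrow> 'x set \<Rightarrow> 'x set \<Rightarrow> bool" where
  "isometry_betw d f U V \<longleftrightarrow> bij_betw f U V \<and> (\<forall>x\<in>U. \<forall>y\<in>U. d (f x) (f y) = d x y)"

definition complete_BA :: "'b::boolean_algebra itself \<Rightarrow> bool" where
  "complete_BA _ \<longleftrightarrow> (\<forall>A::'b set. \<exists>s. (\<forall>a\<in>A. a \<le> s) \<and> (\<forall>u. (\<forall>a\<in>A. a \<le> u) \<longrightarrow> s \<le> u))"

end

theory Submission
  imports Defs
begin

definition sd :: "'b::boolean_algebra \<Rightarrow> 'b \<Rightarrow> 'b" where
  "sd x y = sup (inf x (-y)) (inf (-x) y)"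

definition dd :: "'b::boolean_algebra \<times> 'b \<Rightarrow> 'b \<times> 'b \<Rightarrow> 'b" where
  "dd p q = sup (sd (fst p) (fst q)) (sd (snd p) (snd q))"

lemma sd_comm: "sd x y = sd y x"
  unfolding sd_def by (simp add: sup_commute inf_commute)

lemma disj_le: "inf (x::'b::boolean_algebra) (-y) = bot \<longleftrightarrow> x \<le> y"
  using inf_shunt[of x "-y"] by simp

lemma sd_bot: "sd x y = bot \<longleftrightarrow> (x::'b::boolean_algebra) = y"
proof -
  have "sd x y = bot \<longleftrightarrow> inf x (-y) = bot \<and> inf (-x) y = bot" unfolding sd_def by simp
  also have "\<dots> \<longleftrightarrow> x \<le> y \<and> y \<le> x" using disj_le[of x y] disj_le[of y x] by (simp add: inf_commute)
  finally show ?thesis by auto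
qed

lemma sd_tri_aux: "inf (x::'b::boolean_algebra) (-z) \<le> sup (inf x (-y)) (inf y (-z))"
proof -
  have "inf x (-z) = inf (inf x (-z)) (sup y (-y))" by simp
  also have "\<dots> = sup (inf (inf x (-z)) y) (inf (inf x (-z)) (-y))" by (rule inf_sup_distrib1)
  also have "\<dots> \<le> sup (inf y (-z)) (inf x (-y))"
  proof (rule sup_mono)
    show "inf (inf x (-z)) y \<le> inf y (-z)" by (simp add: inf_commute inf_left_commute le_infI2)
    show "inf (inf x (-z)) (-y) \<le> inf x (-y)" by (simp add: inf_commute inf_left_commute le_infI2)
  qed
  also have "\<dots> = sup (inf x (-y)) (inf y (-z))" by (rule sup_commute)
  finally show ?thesis .
qed

lemma sd_tri: "sd (x::'b::boolean_algebra) z \<le> sup (sd x y) (sd y z)"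
proof -
  have g1: "inf x (-y) \<le> sd x y" "inf (-x) y \<le> sd x y" unfolding sd_def by simp_all
  have g2: "inf y (-z) \<le> sd y z" "inf (-y) z \<le> sd y z" unfolding sd_def by simp_all
  have 1: "inf x (-z) \<le> sup (sd x y) (sd y z)"
    using order_trans[OF sd_tri_aux[of x z y] sup_mono[OF g1(1) g2(1)]] .
  have "inf z (-x) \<le> sup (inf z (-y)) (inf y (-x))" by (rule sd_tri_aux)
  also have "\<dots> = sup (inf (-y) z) (inf (-x) y)" by (simp add: inf_commute)
  also have "\<dots> \<le> sup (sd y z) (sd x y)" by (rule sup_mono[OF g2(2) g1(2)])
  also have "\<dots> = sup (sd x y) (sd y z)" by (rule sup_commute)
  finally have 2: "inf (-x) z \<le> sup (sd x y) (sd y z)" by (simp add: inf_commute)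
  show ?thesis using 1 2 unfolding sd_def[of x z] by (rule le_supI)
qed

lemma agree_sd: "inf a (x::'b::boolean_algebra) = inf a y \<Longrightarrow> inf a (sd x y) = bot"
proof -
  assume h: "inf a x = inf a y"
  have "inf a (inf x (-y)) = bot" by (metis h inf_assoc inf_compl_bot inf_bot_right)
  moreover have "inf a (inf (-x) y) = bot"
    by (metis h inf_assoc inf_commute inf_compl_bot inf_bot_right inf_left_commute)
  ultimately show ?thesis unfolding sd_def by (simp add: inf_sup_distrib1)
qed

lemma sd_top[simp]: "sd x top = - (x::'b::boolean_algebra)" unfolding sd_def by simp
lemma sd_bot2[simp]: "sd x bot = (x::'b::boolean_algebra)" unfolding sd_def by simp
lemma sd_top1[simp]: "sd top x = - (x::'b::boolean_algebra)" unfolding sd_def by simp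
lemma sd_bot1[simp]: "sd bot x = (x::'b::boolean_algebra)" unfolding sd_def by simp

definition XX :: "('b::boolean_algebra \<times> 'b) set" where
  "XX = {p. inf (fst p) (snd p) = bot}"

lemma metric: "bool_metric_space (XX::('b::boolean_algebra \<times> 'b) set) dd"
  unfolding bool_metric_space_def dd_def
proof (intro conjI ballI)
  fix x y :: "'b \<times> 'b"
  show "sup (sd (fst x) (fst y)) (sd (snd x) (snd y)) = sup (sd (fst y) (fst x)) (sd (snd y) (snd x))"
    by (simp add: sd_comm)
  show "(sup (sd (fst x) (fst y)) (sd (snd x) (snd y)) = bot) = (x = y)"
    by (simp add: sd_bot prod_eq_iff)
next
  fix x y z :: "'b \<times> 'b"
  show "sup (sd (fst x) (fst z)) (sd (snd x) (snd z)) \<le> sup (sup (sd (fst x) (fst y)) (sd (snd x) (snd y))) (sup (sd (fst y) (fst z)) (sd (snd y) (snd z)))"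
  proof -
    have "sup (sd (fst x) (fst z)) (sd (snd x) (snd z)) \<le> sup (sup (sd (fst x) (fst y)) (sd (fst y) (fst z))) (sup (sd (snd x) (snd y)) (sd (snd y) (snd z)))"
      by (rule sup_mono) (rule sd_tri)+
    also have "\<dots> = sup (sup (sd (fst x) (fst y)) (sd (snd x) (snd y))) (sup (sd (fst y) (fst z)) (sd (snd y) (snd z)))"
      by (simp add: ac_simps)
    finally show ?thesis .
  qed
qed


lemma part_sup:
  fixes a g :: "nat \<Rightarrow> 'b::boolean_algebra"
  assumes "is_partition n a" "j \<le> n"
  shows "inf (a j) (Sup_fin ((\<lambda>i. inf (a i) (g i)) ` {..n})) = inf (a j) (g j)"
proof (rule antisym)
  let ?S = "Sup_fin ((\<lambda>i. inf (a i) (g i)) ` {..n})"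
  have fin: "finite ((\<lambda>i. inf (a i) (g i)) ` {..n})" by simp
  have ne: "(\<lambda>i. inf (a i) (g i)) ` {..n} \<noteq> {}" by auto
  have disj: "\<And>i. i \<le> n \<Longrightarrow> i \<noteq> j \<Longrightarrow> inf (a i) (a j) = bot"
    using assms unfolding is_partition_def by blast
  have "?S \<le> sup (-a j) (g j)"
  proof (rule Sup_fin.boundedI[OF fin ne])
    fix b assume "b \<in> (\<lambda>i. inf (a i) (g i)) ` {..n}"
    then obtain i where i: "i \<le> n" "b = inf (a i) (g i)" by auto
    show "b \<le> sup (-a j) (g j)"
    proof (cases "i = j")
      case True then show ?thesis using i by (simp add: le_supI2)
    next
      case False
      then have aij: "a i \<le> - a j" using disj[OF i(1) False] by (simp add: inf_shunt)
      have "inf (a i) (g i) \<le> sup (-a j) (g j)"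
        using order_trans[OF inf_le1 order_trans[OF aij sup_ge1]] by simp
      then show ?thesis using i(2) by simp
    qed
  qed
  then have "inf (a j) ?S \<le> inf (a j) (sup (-a j) (g j))" by (rule inf_mono[OF order_refl])
  also have "\<dots> = inf (a j) (g j)" by (simp add: inf_sup_distrib1)
  finally show "inf (a j) ?S \<le> inf (a j) (g j)" .
  have "inf (a j) (g j) \<le> ?S" by (rule Sup_fin.coboundedI[OF fin]) (use assms(2) in auto)
  then show "inf (a j) (g j) \<le> inf (a j) ?S" by simp
qed

lemma convex: "bms_convex (XX::('b::boolean_algebra \<times> 'b) set) dd"
  unfolding bms_convex_def
proof (intro allI impI)
  fix n and xs :: "nat \<Rightarrow> 'b \<times> 'b" and a :: "nat \<Rightarrow> 'b"
  assume h: "(\<forall>i\<le>n. xs i \<in> XX) \<and> is_partition n a"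
  define s where "s = Sup_fin ((\<lambda>i. inf (a i) (fst (xs i))) ` {..n})"
  define t where "t = Sup_fin ((\<lambda>i. inf (a i) (snd (xs i))) ` {..n})"
  have ps: "\<And>j. j \<le> n \<Longrightarrow> inf (a j) s = inf (a j) (fst (xs j))"
    unfolding s_def by (rule part_sup[where g="\<lambda>i. fst (xs i)"]) (use h in auto)
  have pt: "\<And>j. j \<le> n \<Longrightarrow> inf (a j) t = inf (a j) (snd (xs j))"
    unfolding t_def by (rule part_sup[where g="\<lambda>i. snd (xs i)"]) (use h in auto)
  have "\<And>j. j \<le> n \<Longrightarrow> a j \<le> - inf s t"
  proof -
    fix j assume j: "j \<le> n"
    have "inf (a j) (inf s t) = inf (inf (a j) s) (inf (a j) t)"
      by (simp add: inf_assoc inf_left_commute)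
    also have "\<dots> = inf (a j) (inf (fst (xs j)) (snd (xs j)))"
      using ps[OF j] pt[OF j] by (simp add: inf_assoc inf_left_commute)
    also have "\<dots> = bot" using h j by (simp add: XX_def)
    finally show "a j \<le> - inf s t" using inf_shunt[of "a j" "inf s t"] by simp
  qed
  then have "Sup_fin (a ` {..n}) \<le> - inf s t"
    by (intro Sup_fin.boundedI) auto
  then have "top \<le> - inf s t" using h unfolding is_partition_def by simp
  then have st: "inf s t = bot" using inf_shunt[of top "inf s t"] by simp
  show "\<exists>x\<in>XX. convex_comb dd x n xs a"
  proof (intro bexI)
    show "(s, t) \<in> XX" using st by (simp add: XX_def)
    show "convex_comb dd (s, t) n xs a"
      unfolding convex_comb_def dd_def
    proof (intro conjI allI impI)
      show "is_partition n a" using h by simp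
      fix i assume i: "i \<le> n"
      have "inf (a i) (sd s (fst (xs i))) = bot" using agree_sd ps[OF i] by blast
      moreover have "inf (a i) (sd t (snd (xs i))) = bot" using agree_sd pt[OF i] by blast
      ultimately show "inf (a i) (sup (sd (fst (s, t)) (fst (xs i))) (sd (snd (s, t)) (snd (xs i)))) = bot"
        by (simp add: inf_sup_distrib1)
    qed
  qed
qed


lemma fingen: "bms_fin_gen (XX::('b::boolean_algebra \<times> 'b) set) dd"
  unfolding bms_fin_gen_def
proof (rule exI[where x="{(bot,bot),(top,bot),(bot,top)}"], intro conjI ballI)
  let ?S = "{(bot,bot),(top,bot),(bot,top)} :: ('b \<times> 'b) set"
  show "finite ?S" by simp
  show "?S \<subseteq> XX" by (simp add: XX_def)
  fix p :: "'b \<times> 'b" assume "p \<in> XX"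
  then obtain x y where p: "p = (x,y)" and xy: "inf x y = bot" by (cases p) (auto simp: XX_def)
  define c where "c = - sup x y"
  define xs where "xs = (\<lambda>i::nat. if i = 0 then (top,bot) else if i = 1 then (bot,top) else (bot::'b,bot::'b))"
  define a where "a = (\<lambda>i::nat. if i = 0 then x else if i = 1 then y else c)"
  have yx: "inf y x = bot" using xy by (simp add: inf_commute)
  have xc: "inf x c = bot" unfolding c_def using disj_le[of x "sup x y"] by simp
  have yc: "inf y c = bot" unfolding c_def using disj_le[of y "sup x y"] by simp
  have cxy: "inf c (sup x y) = bot" unfolding c_def by (simp only: inf_commute[of "- sup x y"] inf_compl_bot)
  have cx: "inf c x = bot" using xc by (simp add: inf_commute)
  have cy: "inf c y = bot" using yc by (simp add: inf_commute)
  have "sup x (sup y c) = sup (sup x y) (- sup x y)" unfolding c_def by (rule sup_assoc[symmetric])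
  then have top: "sup x (sup y c) = top" using sup_compl_top[of "sup x y"] by (simp only:)
  have le2: "\<And>i::nat. i \<le> 2 \<Longrightarrow> i = 0 \<or> i = 1 \<or> i = 2" by auto
  have at2: "{..2::nat} = {0,1,2}" by auto
  show "\<exists>n xs a. (\<forall>i\<le>n. xs i \<in> ?S) \<and> convex_comb dd p n xs a"
  proof (intro exI conjI)
    show "\<forall>i\<le>2. xs i \<in> ?S" by (simp add: xs_def)
    show "convex_comb dd p 2 xs a"
      unfolding convex_comb_def is_partition_def
    proof (intro conjI allI impI)
      fix i j :: nat assume ij: "i \<le> 2" "j \<le> 2" "i \<noteq> j"
      show "inf (a i) (a j) = bot" using le2[OF ij(1)] le2[OF ij(2)] ij(3) xy yx xc yc cx cy
        unfolding a_def by auto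
    next
      show "Sup_fin (a ` {..2}) = top" using top by (simp add: at2 a_def ac_simps)
    next
      fix i :: nat assume "i \<le> 2"
      then have "i = 0 \<or> i = 1 \<or> i = 2" by (rule le2)
      then show "inf (a i) (dd p (xs i)) = bot"
      proof (elim disjE)
        assume "i = 0" then show ?thesis
          by (simp add: a_def xs_def dd_def p inf_sup_distrib1 xy)
      next
        assume "i = 1" then show ?thesis
          by (simp add: a_def xs_def dd_def p inf_sup_distrib1 yx)
      next
        assume "i = 2" then show ?thesis
          using cxy by (simp add: a_def xs_def dd_def p)
      qed
    qed
  qed
qed

lemma cfg: "CFG_space (XX::('b::boolean_algebra \<times> 'b) set) dd"
  unfolding CFG_space_def using metric convex fingen by blast


lemma sd_disj: "inf x y = bot \<Longrightarrow> sd x (y::'b::boolean_algebra) = sup x y"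
proof -
  assume h: "inf x y = bot"
  have "x \<le> -y" using h by (simp add: inf_shunt)
  then have 1: "inf x (-y) = x" by (rule inf_absorb1)
  have "y \<le> -x" using h inf_commute[of x y] by (simp add: inf_shunt)
  then have 2: "inf (-x) y = y" by (simp add: inf_absorb2)
  show ?thesis unfolding sd_def 1 2 ..
qed

lemma comp_self: "- u \<le> (u::'b::boolean_algebra) \<Longrightarrow> - u = bot"
  using disj_le[of "-u" "u"] by simp

theorem mainTheorem13:
  assumes "\<not> complete_BA TYPE('b::boolean_algebra)"
  shows "\<exists>(X :: ('b \<times> 'b) set) (d :: 'b \<times> 'b \<Rightarrow> 'b \<times> 'b \<Rightarrow> 'b) U V f.
           CFG_space X d \<and> U \<subseteq> X \<and> V \<subseteq> X \<and> isometry_betw d f U V \<and>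
           \<not> (\<exists>F. contractive_on X d F \<and> (\<forall>x\<in>U. F x = f x))"
proof -
  obtain A :: "'b set" where nosup: "\<not> (\<exists>s. (\<forall>a\<in>A. a \<le> s) \<and> (\<forall>u. (\<forall>a\<in>A. a \<le> u) \<longrightarrow> s \<le> u))"
    using assms unfolding complete_BA_def by blast
  define U :: "('b \<times> 'b) set" where "U = {(a,bot)| a. a \<in> A} \<union> {(-u,bot)| u. \<forall>a\<in>A. a \<le> u}"
  define f :: "'b \<times> 'b \<Rightarrow> 'b \<times> 'b" where "f p = (if fst p \<in> A then (bot, fst p) else p)" for p
  have Uprop: "\<And>p. p \<in> U \<Longrightarrow> snd p = bot \<and> (fst p \<notin> A \<longrightarrow> (\<forall>a\<in>A. inf a (fst p) = bot))"
  proof -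
    fix p assume "p \<in> U"
    then consider a where "p = (a,bot)" "a \<in> A" | u where "p = (-u,bot)" "\<forall>a\<in>A. a \<le> u"
      unfolding U_def by blast
    then show "snd p = bot \<and> (fst p \<notin> A \<longrightarrow> (\<forall>a\<in>A. inf a (fst p) = bot))"
    proof cases
      case 1 then show ?thesis by simp
    next
      case 2 then show ?thesis using disj_le by auto
    qed
  qed
  have iso: "\<And>p q. p \<in> U \<Longrightarrow> q \<in> U \<Longrightarrow> dd (f p) (f q) = dd p q"
  proof -
    fix p q assume pU: "p \<in> U" and qU: "q \<in> U"
    obtain x where px: "p = (x,bot)" using Uprop[OF pU] by (cases p) auto
    obtain y where qy: "q = (y,bot)" using Uprop[OF qU] by (cases q) auto
    have hx: "x \<notin> A \<Longrightarrow> \<forall>a\<in>A. inf a x = bot" using Uprop[OF pU] px by simp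
    have hy: "y \<notin> A \<Longrightarrow> \<forall>a\<in>A. inf a y = bot" using Uprop[OF qU] qy by simp
    show "dd (f p) (f q) = dd p q"
    proof (cases "x \<in> A"; cases "y \<in> A")
      assume "x \<in> A" "y \<in> A" then show ?thesis by (simp add: f_def px qy dd_def)
    next
      assume a: "x \<in> A" "y \<notin> A"
      then have "inf x y = bot" using hy by blast
      then show ?thesis using a by (simp add: f_def px qy dd_def sd_disj sup_commute)
    next
      assume a: "x \<notin> A" "y \<in> A"
      then have "inf y x = bot" using hx by blast
      then have "inf x y = bot" by (simp add: inf_commute)
      then show ?thesis using a by (simp add: f_def px qy dd_def sd_disj sup_commute)
    next
      assume "x \<notin> A" "y \<notin> A" then show ?thesis by (simp add: f_def px qy)
    qed
  qed
  have inj: "inj_on f U"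
  proof (rule inj_onI)
    fix p q assume "p \<in> U" "q \<in> U" "f p = f q"
    then have "dd p q = bot" using iso[of p q] metric unfolding bool_metric_space_def dd_def
      by (metis sd_bot sup_bot_left)
    then show "p = q" unfolding dd_def by (simp add: sd_bot prod_eq_iff)
  qed
  have UX: "U \<subseteq> XX"
  proof
    fix p assume "p \<in> U"
    then have "snd p = bot" using Uprop by blast
    then show "p \<in> XX" by (simp add: XX_def)
  qed
  have VX: "f ` U \<subseteq> XX"
  proof
    fix r assume "r \<in> f ` U"
    then obtain p where pU: "p \<in> U" and r: "r = f p" by blast
    have "snd p = bot" using Uprop[OF pU] by blast
    then show "r \<in> XX" by (simp add: XX_def f_def r)
  qed
  have isob: "isometry_betw dd f U (f ` U)"
    unfolding isometry_betw_def using inj iso by (simp add: inj_on_imp_bij_betw)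
  have noext: "\<not> (\<exists>F. contractive_on XX dd F \<and> (\<forall>x\<in>U. F x = f x))"
  proof
    assume "\<exists>F. contractive_on XX dd F \<and> (\<forall>x\<in>U. F x = f x)"
    then obtain F where Fc: "\<forall>x\<in>XX. \<forall>y\<in>XX. dd (F x) (F y) \<le> dd x y" and Fe: "\<forall>x\<in>U. F x = f x"
      unfolding contractive_on_def by blast
    define q :: "'b \<times> 'b" where "q = (top, bot)"
    have qX: "q \<in> XX" by (simp add: q_def XX_def)
    obtain s t where st: "F q = (s,t)" by (cases "F q")
    have up: "\<forall>a\<in>A. a \<le> t"
    proof
      fix a assume aA: "a \<in> A"
      have pU: "(a,bot) \<in> U" using aA unfolding U_def by blast
      have "dd (F q) (F (a,bot)) \<le> dd q (a,bot)" using Fc qX UX pU by blast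
      moreover have Fa: "F (a,bot) = (bot,a)" using Fe pU aA by (simp add: f_def)
      ultimately have "dd (s,t) (bot,a) \<le> dd q (a,bot)" by (simp only: st)
      then have "sup s (sd t a) \<le> - a" by (simp add: dd_def q_def)
      then have "sd t a \<le> - a" by simp
      moreover have "inf (-t) a \<le> sd t a" unfolding sd_def by simp
      ultimately have "inf (-t) a \<le> inf a (-a)" by (meson inf_le2 le_inf_iff order_trans)
      then have "inf a (-t) \<le> bot" by (simp add: inf_commute)
      then have "inf a (-t) = bot" by (rule bot_unique[THEN iffD1])
      then show "a \<le> t" using disj_le by blast
    qed
    have least: "\<forall>u. (\<forall>a\<in>A. a \<le> u) \<longrightarrow> t \<le> u"
    proof (intro allI impI)
      fix u assume ub: "\<forall>a\<in>A. a \<le> u"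
      have pU: "(-u,bot) \<in> U" using ub unfolding U_def by blast
      have fp: "f (-u,bot) = (-u,bot)"
      proof (cases "-u \<in> A")
        case True
        then have "-u = bot" using ub comp_self by blast
        then show ?thesis using True by (simp add: f_def)
      qed (simp add: f_def)
      have "dd (F q) (F (-u,bot)) \<le> dd q (-u,bot)" using Fc qX UX pU by blast
      moreover have Fa: "F (-u,bot) = (-u,bot)" using Fe pU fp by simp
      ultimately have "dd (s,t) (-u,bot) \<le> dd q (-u,bot)" by (simp only: st)
      then have "sup (sd s (-u)) t \<le> u" by (simp add: dd_def q_def)
      then show "t \<le> u" by simp
    qed
    show False using nosup up least by blast
  qed
  show ?thesis using cfg UX VX isob noext by blast
qed

end
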